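(* Let $H_1$ and $H_2$ be graphs such that either (i) $m_2(H_1) > m_2(H_2) > 1$, $H_2$ is strictly $2$-balanced and $H_1$ is strictly balanced with respect to $d_2(\cdot,H_2)$; or (ii) $m_2(H_1) = m_2(H_2) > 1$ and $H_1$ and $H_2$ are both strictly $2$-balanced. Then $H_1$ and $H_2$ are both $2$-connected.
   Context: For a graph $H$ write $v_H=|V(H)|$, $e_H=|E(H)|$. Define $d_2(H) = (e_H-1)/(v_H-2)$ if $H$ is non-empty and $v_H \geq 3$; $d_2(K_2)=1/2$; $d_2(H)=0$ otherwise. Let $m_2(H)=\max\{d_2(J) : J \subseteq H\}$. $H$ is strictly $2$-balanced if $d_2(J) < m_2(H)$ for every proper subgraph $J \subsetneq H$. For graphs $H_1,H_2$ define $d_2(H_1,H_2) = e_{H_1}/(v_{H_1} - 2 + 1/m_2(H_2))$ if $H_2$ is non-empty and $v_{H_1} \geq 2$, and $0$ otherwise; $m_2(H_1,H_2) = \max\{d_2(J,H_2) : J \subseteq H_1\}$. $H_1$ is strictly balanced with respect to $d_2(\cdot,H_2)$ if $d_2(J,H_2) < m_2(H_1,H_2)$ for every proper subgraph $J \subsetneq H_1$. *)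

theory Defs
  imports Main Complex_Main
begin

definition is_graph :: "'a set \<Rightarrow> 'a set set \<Rightarrow> bool" where
  "is_graph V E \<longleftrightarrow> finite V \<and> (\<forall>e\<in>E. e \<subseteq> V \<and> card e = 2)"

definition subgraph :: "'a set \<Rightarrow> 'a set set \<Rightarrow> 'a set \<Rightarrow> 'a set set \<Rightarrow> bool" where
  "subgraph V' E' V E \<longleftrightarrow> is_graph V' E' \<and> V' \<subseteq> V \<and> E' \<subseteq> E"

definition d2 :: "'a set \<Rightarrow> 'a set set \<Rightarrow> real" where
  "d2 V E = (if E \<noteq> {} \<and> card V \<ge> 3 then (real (card E) - 1) / (real (card V) - 2)
             else if card V = 2 \<and> card E = 1 then 1/2 else 0)"

definition m2 :: "'a set \<Rightarrow> 'a set set \<Rightarrow> real" where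
  "m2 V E = Max {d2 V' E' | V' E'. subgraph V' E' V E}"

definition strictly_2_balanced :: "'a set \<Rightarrow> 'a set set \<Rightarrow> bool" where
  "strictly_2_balanced V E \<longleftrightarrow>
     (\<forall>V' E'. subgraph V' E' V E \<and> (V', E') \<noteq> (V, E) \<longrightarrow> d2 V' E' < m2 V E)"

definition d2_pair :: "'a set \<Rightarrow> 'a set set \<Rightarrow> 'b set \<Rightarrow> 'b set set \<Rightarrow> real" where
  "d2_pair V1 E1 V2 E2 = (if E2 \<noteq> {} \<and> card V1 \<ge> 2
       then real (card E1) / (real (card V1) - 2 + 1 / m2 V2 E2) else 0)"

definition m2_pair :: "'a set \<Rightarrow> 'a set set \<Rightarrow> 'b set \<Rightarrow> 'b set set \<Rightarrow> real" where
  "m2_pair V1 E1 V2 E2 = Max {d2_pair V' E' V2 E2 | V' E'. subgraph V' E' V1 E1}"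

definition strictly_balanced_wrt_d2 :: "'a set \<Rightarrow> 'a set set \<Rightarrow> 'b set \<Rightarrow> 'b set set \<Rightarrow> bool" where
  "strictly_balanced_wrt_d2 V1 E1 V2 E2 \<longleftrightarrow>
     (\<forall>V' E'. subgraph V' E' V1 E1 \<and> (V', E') \<noteq> (V1, E1) \<longrightarrow>
        d2_pair V' E' V2 E2 < m2_pair V1 E1 V2 E2)"

definition connected_graph :: "'a set \<Rightarrow> 'a set set \<Rightarrow> bool" where
  "connected_graph V E \<longleftrightarrow> V \<noteq> {} \<and>
     (\<forall>u\<in>V. \<forall>v\<in>V. (u, v) \<in> {(a, b). {a, b} \<in> E}\<^sup>*)"

definition two_connected :: "'a set \<Rightarrow> 'a set set \<Rightarrow> bool" where
  "two_connected V E \<longleftrightarrow> card V \<ge> 3 \<and> connected_graph V E \<and>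
     (\<forall>x\<in>V. connected_graph (V - {x}) {e \<in> E. x \<notin> e})"

end

theory Submission
  imports Defs
begin
lemma graph_finE: "is_graph V E \<Longrightarrow> finite E"
  unfolding is_graph_def by (meson PowI finite_Pow_iff finite_subset subsetI)

lemma sep:
  assumes g: "is_graph V E"
    and P: "\<And>V' E'. subgraph V' E' V E \<Longrightarrow> (V',E') \<noteq> (V,E) \<Longrightarrow> card V' \<ge> 2
             \<Longrightarrow> real (card E') - a \<le> D * (real (card V') - b)"
    and AV: "A \<subseteq> V" "B \<subseteq> V" "A \<noteq> V" "B \<noteq> V" "2 \<le> card A" "2 \<le> card B"
    and cov: "\<forall>e\<in>E. e \<subseteq> A \<or> e \<subseteq> B" and int: "card (A \<inter> B) \<le> 1"
  shows "real (card E) - 2*a \<le> D * (real (card A) + real (card B) - 2*b)"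
proof -
  define EA where "EA = {e\<in>E. e \<subseteq> A}"
  define EB where "EB = {e\<in>E. e \<subseteq> B}"
  have fV: "finite V" using g is_graph_def by blast
  have fA: "finite A" using fV AV(1) finite_subset by blast
  have fB: "finite B" using fV AV(2) finite_subset by blast
  have c2: "\<forall>e\<in>E. card e = 2" using g unfolding is_graph_def by blast
  have sA: "subgraph A EA V E" unfolding subgraph_def is_graph_def EA_def using fA AV(1) c2 by blast
  have sB: "subgraph B EB V E" unfolding subgraph_def is_graph_def EB_def using fB AV(2) c2 by blast
  have 1: "real (card EA) - a \<le> D * (real (card A) - b)" using P[OF sA] AV by blast
  have 2: "real (card EB) - a \<le> D * (real (card B) - b)" using P[OF sB] AV by blast
  have fE: "finite E" using graph_finE[OF g] .
  have Eu: "E = EA \<union> EB" using cov unfolding EA_def EB_def by blast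
  have dj: "EA \<inter> EB = {}"
  proof (rule ccontr)
    assume "EA \<inter> EB \<noteq> {}"
    then obtain e where e: "e \<in> E" "e \<subseteq> A \<inter> B" unfolding EA_def EB_def by blast
    have "finite (A \<inter> B)" using fA by blast
    then have "card e \<le> card (A \<inter> B)" using e(2) by (rule card_mono)
    then show False using e(1) c2 int by fastforce
  qed
  have fEA: "finite EA" "finite EB" using fE unfolding EA_def EB_def by auto
  have "card E = card EA + card EB"
    unfolding Eu using card_Un_disjoint[OF fEA dj] .
  then show ?thesis using 1 2 by (simp add: algebra_simps)
qed

lemma edge2: "is_graph V E \<Longrightarrow> e \<in> E \<Longrightarrow> \<exists>p q. e = {p,q} \<and> p \<noteq> q \<and> p \<in> V \<and> q \<in> V"
  unfolding is_graph_def by (metis card_2_iff insert_subset)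
lemma noiso:
  assumes g: "is_graph V E"
    and P: "\<And>V' E'. subgraph V' E' V E \<Longrightarrow> (V',E') \<noteq> (V,E) \<Longrightarrow> card V' \<ge> 2
             \<Longrightarrow> real (card E') - a \<le> D * (real (card V') - b)"
    and H: "real (card E) - a = D * (real (card V) - b)" and D: "D > 0"
    and c3: "card V \<ge> 3" and u: "u \<in> V"
  shows "\<exists>e\<in>E. u \<in> e"
proof (rule ccontr)
  assume "\<not> ?thesis"
  then have s: "subgraph (V - {u}) E V E" using g unfolding subgraph_def is_graph_def by auto
  have fV: "finite V" using g is_graph_def by blast
  have cV: "card (V - {u}) = card V - 1" using u fV by simp
  have "(V - {u}, E) \<noteq> (V, E)" using u by auto
  then have "real (card E) - a \<le> D * (real (card (V-{u})) - b)" using P[OF s] cV c3 by auto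
  also have "\<dots> = D * (real (card V) - 1 - b)" using cV c3 by simp
  finally show False using H D by (simp add: algebra_simps)
qed

lemma generic:
  assumes g: "is_graph V E"
    and P: "\<And>V' E'. subgraph V' E' V E \<Longrightarrow> (V',E') \<noteq> (V,E) \<Longrightarrow> card V' \<ge> 2
             \<Longrightarrow> real (card E') - a \<le> D * (real (card V') - b)"
    and H: "real (card E) - a = D * (real (card V) - b)" and D: "D > 0"
    and c3: "card V \<ge> 3" and k0: "D * b > a" and k1: "D * (b - 1) > a"
  shows "two_connected V E"
proof -
  have fV: "finite V" using g is_graph_def by blast
  define R where "R = {(p, q). {p, q} \<in> E}"
  have conn: "connected_graph V E"
    unfolding connected_graph_def
  proof (intro conjI ballI)
    show "V \<noteq> {}" using c3 by auto
    fix u v assume uv: "u \<in> V" "v \<in> V"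
    show "(u, v) \<in> {(a, b). {a, b} \<in> E}\<^sup>*"
    proof (rule ccontr)
      assume nc: "(u, v) \<notin> {(a, b). {a, b} \<in> E}\<^sup>*"
      define A where "A = {w\<in>V. (u, w) \<in> R\<^sup>*}"
      define B where "B = V - A"
      have cl: "q \<in> A" if "{p,q} \<in> E" "p \<in> A" for p q
        using that edge2[OF g that(1)] unfolding A_def R_def
        by (auto intro: rtrancl_into_rtrancl)
      have cov: "\<forall>e\<in>E. e \<subseteq> A \<or> e \<subseteq> B"
      proof
        fix e assume e: "e \<in> E"
        then obtain p q where pq: "e = {p,q}" "p \<in> V" "q \<in> V" using edge2[OF g] by blast
        have "{q,p} \<in> E" using e pq by (simp add: insert_commute)
        then show "e \<subseteq> A \<or> e \<subseteq> B" using cl[of p q] cl[of q p] e pq B_def by auto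
      qed
      have uA: "u \<in> A" using uv A_def by auto
      have vB: "v \<in> B" using uv nc A_def B_def R_def by auto
      obtain e1 where e1: "e1 \<in> E" "u \<in> e1" using noiso[OF g P H D c3 uv(1)] by blast
      obtain p1 q1 where pq1: "e1 = {p1,q1}" "p1 \<noteq> q1" using edge2[OF g e1(1)] by blast
      have "e1 \<subseteq> A" using cov e1 uA B_def by auto
      then have cA: "card A \<ge> 2" using pq1 fV A_def
        by (metis (no_types, lifting) card_2_iff card_mono finite_subset mem_Collect_eq subsetI)
      obtain e2 where e2: "e2 \<in> E" "v \<in> e2" using noiso[OF g P H D c3 uv(2)] by blast
      obtain p2 q2 where pq2: "e2 = {p2,q2}" "p2 \<noteq> q2" using edge2[OF g e2(1)] by blast
      have "e2 \<subseteq> B" using cov e2 vB B_def by auto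
      then have cB: "card B \<ge> 2" using pq2 fV B_def
        by (metis card_2_iff card_mono finite_Diff)
      have ineq: "real (card E) - 2*a \<le> D * (real (card A) + real (card B) - 2*b)"
        apply (rule sep[OF g P])
        using uA vB cA cB cov B_def A_def by auto
      have AV: "A \<subseteq> V" using A_def by auto
      have ceq: "card A + card B = card V" unfolding B_def
        using card_Diff_subset[OF finite_subset[OF AV fV] AV] card_mono[OF fV AV] by simp
      have rc: "real (card A) + real (card B) = real (card V)" using arg_cong[OF ceq, of real] by simp
      have "D * (real (card A) + real (card B) - 2*b) = D * (real (card V) - 2*b)"
        by (simp only: rc)
      then have e1: "D * (real (card A) + real (card B) - 2*b) = D * real (card V) - 2*(D*b)"
        by (simp add: algebra_simps)
      have e2: "D * (real (card V) - b) = D * real (card V) - D*b" by (simp add: algebra_simps)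
      show False using H k0 ineq e1 e2 by linarith
    qed
  qed
  have cut: "connected_graph (V - {x}) {e \<in> E. x \<notin> e}" if xV: "x \<in> V" for x
    unfolding connected_graph_def
  proof (intro conjI ballI)
    have "card (V - {x}) = card V - 1" using xV fV by simp
    then have "card (V - {x}) \<noteq> 0" using c3 by simp
    then show "V - {x} \<noteq> {}" by (metis card.empty)
    define W where "W = V - {x}"
    define Rx where "Rx = {(a, b). {a, b} \<in> {e \<in> E. x \<notin> e}}"
    fix u v assume uv: "u \<in> V - {x}" "v \<in> V - {x}"
    show "(u, v) \<in> Rx\<^sup>*" unfolding Rx_def[symmetric]
    proof (rule ccontr)
      assume nc: "(u, v) \<notin> Rx\<^sup>*"
      define A0 where "A0 = {w\<in>W. (u, w) \<in> Rx\<^sup>*}"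
      define A where "A = insert x A0"
      define B where "B = insert x (W - A0)"
      have cl: "q \<in> A0" if "{p,q} \<in> E" "p \<in> A0" "q \<noteq> x" for p q
      proof -
        have pW: "p \<in> W" "(u,p) \<in> Rx\<^sup>*" using that(2) unfolding A0_def by auto
        then have "p \<noteq> x" unfolding W_def by blast
        then have "(p,q) \<in> Rx" using that(1,3) unfolding Rx_def by simp
        with pW(2) have "(u,q) \<in> Rx\<^sup>*" by (rule rtrancl_into_rtrancl)
        moreover have "{p,q} \<subseteq> V" using g that(1) unfolding is_graph_def by blast
        then have "q \<in> W" using that(3) unfolding W_def by blast
        ultimately show ?thesis unfolding A0_def by blast
      qed
      have cov: "\<forall>e\<in>E. e \<subseteq> A \<or> e \<subseteq> B"
      proof
        fix e assume e: "e \<in> E"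
        then obtain p q where pq: "e = {p,q}" "p \<in> V" "q \<in> V" using edge2[OF g] by blast
        have e': "{q,p} \<in> E" using e pq by (simp add: insert_commute)
        have 1: "p \<in> A0 \<Longrightarrow> q \<noteq> x \<Longrightarrow> q \<in> A0" using cl[of p q] e pq by blast
        have 2: "q \<in> A0 \<Longrightarrow> p \<noteq> x \<Longrightarrow> p \<in> A0" using cl[of q p] e' by blast
        have 3: "p \<in> W \<or> p = x" "q \<in> W \<or> q = x" using pq unfolding W_def by auto
        show "e \<subseteq> A \<or> e \<subseteq> B" unfolding pq A_def B_def using 1 2 3 by blast
      qed
      have uA: "u \<in> A0" using uv A0_def W_def by auto
      have vB: "v \<notin> A0" using uv nc A0_def by auto
      have fW: "finite W" using fV W_def by auto
      have A0W: "A0 \<subseteq> W" using A0_def by auto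
      have fA0: "finite A0" using fW A0W finite_subset by blast
      have xA0: "x \<notin> A0" using A0W W_def by auto
      have "card {x,u} \<le> card A" by (rule card_mono) (use fA0 A_def uA in auto)
      then have cA: "card A \<ge> 2" using uv by auto
      have "card {x,v} \<le> card B" by (rule card_mono) (use fW B_def vB uv W_def in auto)
      then have cB: "card B \<ge> 2" using uv by auto
      have AB: "A \<inter> B = {x}" using A_def B_def W_def A0W by auto
      have ineq: "real (card E) - 2*a \<le> D * (real (card A) + real (card B) - 2*b)"
      proof (rule sep[OF g P _ _ _ _ cA cB cov])
        show "A \<subseteq> V" using A_def A0W W_def xV by auto
        show "B \<subseteq> V" using B_def W_def xV by auto
        show "A \<noteq> V" using A_def vB uv by auto
        show "B \<noteq> V" using B_def uA uv by auto
        show "card (A \<inter> B) \<le> 1" using AB by simp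
      qed
      have ceq: "card A + card B = card V + 1"
      proof -
        have "card A = card A0 + 1" using A_def fA0 xA0 by simp
        moreover have "card B = card (W - A0) + 1" using B_def W_def fW by simp
        moreover have "card A0 + card (W - A0) = card W"
          using card_Diff_subset[OF fA0 A0W] card_mono[OF fW A0W] by simp
        moreover have "card W = card V - 1" using W_def xV fV by simp
        ultimately show ?thesis using c3 by linarith
      qed
      have rc: "real (card A) + real (card B) = real (card V) + 1" using arg_cong[OF ceq, of real] by simp
      have "D * (real (card A) + real (card B) - 2*b) = D * ((real (card V) + 1) - 2*b)"
        by (simp only: rc)
      then have e1: "D * (real (card A) + real (card B) - 2*b) = D * real (card V) + D - 2*(D*b)"
        by (simp add: algebra_simps)
      have e2: "D * (real (card V) - b) = D * real (card V) - D*b" by (simp add: algebra_simps)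
      have e3: "D * (b - 1) = D*b - D" by (simp add: algebra_simps)
      show False using H k1 ineq e1 e2 e3 by linarith
    qed
  qed
  show ?thesis unfolding two_connected_def using c3 conn cut by blast
qed

lemma maxprops:
  fixes f :: "'a set \<Rightarrow> 'a set set \<Rightarrow> real"
  assumes g: "is_graph V E"
  shows "(\<exists>V' E'. subgraph V' E' V E \<and> Max {f V' E' | V' E'. subgraph V' E' V E} = f V' E')
    \<and> (\<forall>V' E'. subgraph V' E' V E \<longrightarrow> f V' E' \<le> Max {f V' E' | V' E'. subgraph V' E' V E})"
proof -
  have fV: "finite V" using g is_graph_def by blast
  have fE: "finite E" using g unfolding is_graph_def
    by (meson PowI finite_Pow_iff finite_subset subsetI)
  have sub: "{(V',E'). subgraph V' E' V E} \<subseteq> Pow V \<times> Pow E" unfolding subgraph_def by blast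
  have "finite (Pow V \<times> Pow E)" using fV fE by simp
  then have fS: "finite {(V',E'). subgraph V' E' V E}" using sub finite_subset by blast
  have eq: "{f V' E' | V' E'. subgraph V' E' V E} \<subseteq> (\<lambda>p. f (fst p) (snd p)) ` {(V',E'). subgraph V' E' V E}"
  proof
    fix y assume "y \<in> {f V' E' | V' E'. subgraph V' E' V E}"
    then obtain V' E' where y: "y = f V' E'" "subgraph V' E' V E" by blast
    show "y \<in> (\<lambda>p. f (fst p) (snd p)) ` {(V',E'). subgraph V' E' V E}"
      by (rule image_eqI[of _ _ "(V',E')"]) (use y in auto)
  qed
  have fin: "finite {f V' E' | V' E'. subgraph V' E' V E}"
    using finite_subset[OF eq finite_imageI[OF fS]] .
  have "subgraph {} {} V E" unfolding subgraph_def is_graph_def by simp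
  then have ne: "{f V' E' | V' E'. subgraph V' E' V E} \<noteq> {}" by blast
  have "Max {f V' E' | V' E'. subgraph V' E' V E} \<in> {f V' E' | V' E'. subgraph V' E' V E}"
    using Max_in[OF fin ne] .
  then have 1: "\<exists>V' E'. subgraph V' E' V E \<and> Max {f V' E' | V' E'. subgraph V' E' V E} = f V' E'"
    by blast
  have 2: "\<forall>V' E'. subgraph V' E' V E \<longrightarrow> f V' E' \<le> Max {f V' E' | V' E'. subgraph V' E' V E}"
    using Max_ge[OF fin] by blast
  show ?thesis using 1 2 by blast
qed

lemma m2_props:
  assumes g: "is_graph V E"
  shows "\<exists>V' E'. subgraph V' E' V E \<and> m2 V E = d2 V' E'"
  using maxprops[OF g, of d2] unfolding m2_def by blast

lemma d2_gt1:
  assumes "d2 V E > 1" shows "E \<noteq> {}" "card V \<ge> 3"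
  using assms unfolding d2_def by (auto split: if_splits)

lemma sb_conn:
  assumes g: "is_graph V E" and sb: "strictly_2_balanced V E" and m: "m2 V E > 1"
  shows "two_connected V E"
proof -
  define D where "D = m2 V E"
  obtain V0 E0 where s0: "subgraph V0 E0 V E" "m2 V E = d2 V0 E0" using m2_props[OF g] by blast
  have "(V0, E0) = (V, E)"
  proof (rule ccontr)
    assume "(V0, E0) \<noteq> (V, E)"
    then have "d2 V0 E0 < m2 V E" using sb s0(1) unfolding strictly_2_balanced_def by blast
    then show False using s0(2) by simp
  qed
  then have dD: "d2 V E = D" using s0 D_def by simp
  then have Ene: "E \<noteq> {}" and c3: "card V \<ge> 3" using d2_gt1[of V E] m D_def by auto
  have "D = (real (card E) - 1) / (real (card V) - 2)" using dD Ene c3 unfolding d2_def by simp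
  moreover have "real (card V) - 2 > 0" using c3 by simp
  ultimately have H: "real (card E) - 1 = D * (real (card V) - 2)" by simp
  have Dp: "D > 0" using m D_def by simp
  show ?thesis
  proof (rule generic[OF g _ H Dp c3])
    show "D * 2 > 1" "D * (2 - 1) > 1" using m D_def by auto
    fix V' E' assume s: "subgraph V' E' V E" and pr: "(V', E') \<noteq> (V, E)" and c2: "card V' \<ge> 2"
    have lt: "d2 V' E' < D" using sb s pr unfolding strictly_2_balanced_def D_def by blast
    have gV': "is_graph V' E'" using s subgraph_def by blast
    show "real (card E') - 1 \<le> D * (real (card V') - 2)"
    proof (cases "E' = {}")
      case True
      have "D * (real (card V') - 2) \<ge> 0" using Dp c2 by simp
      then show ?thesis using True by simp
    next
      case False
      show ?thesis
      proof (cases "card V' \<ge> 3")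
        case True
        then have "d2 V' E' = (real (card E') - 1) / (real (card V') - 2)"
          using False unfolding d2_def by simp
        moreover have "real (card V') - 2 > 0" using True by simp
        ultimately show ?thesis using lt by (simp add: pos_divide_less_eq)
      next
        case False
        then have c2': "card V' = 2" using c2 by simp
        have "E' \<subseteq> {V'}"
        proof
          fix e assume "e \<in> E'"
          then have "e \<subseteq> V'" "card e = 2" "finite V'" using gV' unfolding is_graph_def by auto
          then have "e = V'" using c2' card_subset_eq[of V' e] by simp
          then show "e \<in> {V'}" by simp
        qed
        then have "card E' \<le> 1" using card_mono[of "{V'}" E'] by simp
        then show ?thesis using c2' by simp
      qed
    qed
  qed
qed

lemma aux_div: "(d::real) > 0 \<Longrightarrow> D = e / d \<Longrightarrow> e = D * d"
  by simp

lemma pair_conn: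
  assumes g1: "is_graph V1 E1" and g2: "is_graph V2 E2"
    and sb: "strictly_balanced_wrt_d2 V1 E1 V2 E2"
    and m1: "m2 V1 E1 > 1" and m: "m2 V2 E2 > 1"
  shows "two_connected V1 E1"
proof -
  define c where "c = 1 / m2 V2 E2"
  have c0: "c > 0" "c < 1"
    using m divide_less_eq_1_pos[of "m2 V2 E2" 1] unfolding c_def by simp_all
  obtain V' E' where s2: "subgraph V' E' V2 E2" "m2 V2 E2 = d2 V' E'" using m2_props[OF g2] by blast
  have "E' \<noteq> {}" using d2_gt1(1)[of V' E'] s2(2) m by simp
  moreover have "E' \<subseteq> E2" using s2(1) unfolding subgraph_def by blast
  ultimately have E2ne: "E2 \<noteq> {}" by blast
  obtain V'' E'' where s1: "subgraph V'' E'' V1 E1" "m2 V1 E1 = d2 V'' E''" using m2_props[OF g1] by blast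
  have ne'': "E'' \<noteq> {}" using d2_gt1(1)[of V'' E''] s1(2) m1 by simp
  have c3'': "card V'' \<ge> 3" using d2_gt1(2)[of V'' E''] s1(2) m1 by simp
  have fV1: "finite V1" using g1 is_graph_def by blast
  have sub'': "V'' \<subseteq> V1" "E'' \<subseteq> E1" using s1(1) unfolding subgraph_def by blast+
  have E1ne: "E1 \<noteq> {}" using ne'' sub'' by blast
  have "card V'' \<le> card V1" by (rule card_mono[OF fV1 sub''(1)])
  then have c3: "card V1 \<ge> 3" using c3'' by linarith
  define D where "D = m2_pair V1 E1 V2 E2"
  have mp: "\<exists>V' E'. subgraph V' E' V1 E1 \<and> Max {d2_pair V' E' V2 E2 | V' E'. subgraph V' E' V1 E1} = d2_pair V' E' V2 E2"
    using conjunct1[OF maxprops[OF g1, of "\<lambda>V' E'. d2_pair V' E' V2 E2"]] .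
  then obtain V0 E0 where s0: "subgraph V0 E0 V1 E1" "D = d2_pair V0 E0 V2 E2"
    unfolding D_def m2_pair_def by blast
  have "(V0, E0) = (V1, E1)"
  proof (rule ccontr)
    assume "(V0, E0) \<noteq> (V1, E1)"
    then have "d2_pair V0 E0 V2 E2 < D" using sb s0(1) unfolding strictly_balanced_wrt_d2_def D_def by blast
    then show False using s0(2) by simp
  qed
  then have dD: "D = real (card E1) / (real (card V1) - 2 + c)"
    using s0 E2ne c3 unfolding d2_pair_def c_def by simp
  have den: "real (card V1) - 2 + c > 0" using c3 c0 by simp
  have fE1: "finite E1" using graph_finE[OF g1] .
  have "card E1 > 0" using E1ne fE1 by (simp add: card_gt_0_iff)
  then have Dp: "D > 0" unfolding dD using den by simp
  have eE: "real (card E1) = D * (real (card V1) - 2 + c)" using aux_div[OF den dD] .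
  have "real (card V1) - (2 - c) = real (card V1) - 2 + c" by simp
  then have H: "real (card E1) - 0 = D * (real (card V1) - (2 - c))" using eE by simp
  show ?thesis
  proof (rule generic[OF g1 _ H Dp c3])
    show "D * (2 - c) > 0" by (rule mult_pos_pos) (use Dp c0 in auto)
    show "D * (2 - c - 1) > 0" by (rule mult_pos_pos) (use Dp c0 in auto)
    fix V' E' assume s: "subgraph V' E' V1 E1" and pr: "(V', E') \<noteq> (V1, E1)" and c2: "card V' \<ge> 2"
    have lt: "d2_pair V' E' V2 E2 < D" using sb s pr unfolding strictly_balanced_wrt_d2_def D_def by blast
    have "d2_pair V' E' V2 E2 = real (card E') / (real (card V') - 2 + c)"
      using E2ne c2 unfolding d2_pair_def c_def by simp
    moreover have dpos: "real (card V') - 2 + c > 0" using c2 c0 by simp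
    ultimately have "real (card E') < D * (real (card V') - 2 + c)" using lt
      by (simp add: pos_divide_less_eq)
    then show "real (card E') - 0 \<le> D * (real (card V') - (2 - c))" by (simp add: algebra_simps)
  qed
qed

theorem lemma4p1:
  fixes V1 :: "'a set" and E1 :: "'a set set" and V2 :: "'b set" and E2 :: "'b set set"
  assumes "is_graph V1 E1" and "is_graph V2 E2"
  assumes "(m2 V1 E1 > m2 V2 E2 \<and> m2 V2 E2 > 1 \<and> strictly_2_balanced V2 E2
              \<and> strictly_balanced_wrt_d2 V1 E1 V2 E2)
         \<or> (m2 V1 E1 = m2 V2 E2 \<and> m2 V2 E2 > 1 \<and> strictly_2_balanced V1 E1
              \<and> strictly_2_balanced V2 E2)"
  shows "two_connected V1 E1 \<and> two_connected V2 E2"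
  using assms(3)
proof
  assume h: "m2 V1 E1 > m2 V2 E2 \<and> m2 V2 E2 > 1 \<and> strictly_2_balanced V2 E2
              \<and> strictly_balanced_wrt_d2 V1 E1 V2 E2"
  then show ?thesis using sb_conn[OF assms(2)] pair_conn[OF assms(1,2)] by auto
next
  assume h: "m2 V1 E1 = m2 V2 E2 \<and> m2 V2 E2 > 1 \<and> strictly_2_balanced V1 E1
              \<and> strictly_2_balanced V2 E2"
  then show ?thesis using sb_conn[OF assms(2)] sb_conn[OF assms(1)] by auto
qed

end
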